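(* Let $g \geq 1$, let $B(g)$ be the set of binary strings $b=(b_1,\dots,b_{2g})$ of length $2g$ with $b_i \neq b_{i+g}$ for $1 \le i \le g$, and let $E'(g)$ be the set of orbits of $B(g)$ under cyclic shifts whose elements have period $2g$. Then \[ |E'(g)| = \frac{P(2g)}{2g} = \frac{1}{2g} \sum_{\substack{x\mid g \\ x \text{ odd}}} \mu(x)\,2^{g/x}, \] where $P(2g)$ is the number of elements of $B(g)$ of period $2g$.
   Context: The cyclic group of order $2g$ acts on binary strings of length $2g$ by cyclic shifts, preserving $B(g)$. The period of a binary string is the smallest positive integer $k$ such that the string is fixed by the cyclic shift by $k$; period is constant on orbits. $\mu$ is the Möbius function. (Elements of $B(g)$ encode CM types of a cyclic CM field of degree $2g$; the orbits of period $2g$ are exactly the equivalence classes of primitive CM types.) *)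

theory Defs
  imports Complex_Main "HOL-Computational_Algebra.Computational_Algebra"
begin

definition moebius :: "nat \<Rightarrow> int" where
  "moebius n = (if n = 0 then 0 else if squarefree n then (-1) ^ card (prime_factors n) else 0)"

text \<open>Binary strings of length 2g with b_i \<noteq> b_(i+g) (0-indexed).\<close>
definition Bstr :: "nat \<Rightarrow> bool list set" where
  "Bstr g = {b. length b = 2 * g \<and> (\<forall>i<g. b ! i \<noteq> b ! (i + g))}"

definition period :: "bool list \<Rightarrow> nat" where
  "period b = (LEAST k. 0 < k \<and> rotate k b = b)"

definition cyc_orbit :: "bool list \<Rightarrow> bool list set" where
  "cyc_orbit b = {rotate k b | k. True}"

definition Eprime :: "nat \<Rightarrow> bool list set set" where
  "Eprime g = {cyc_orbit b | b. b \<in> Bstr g \<and> period b = 2 * g}"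

definition Pcount :: "nat \<Rightarrow> nat" where
  "Pcount g = card {b \<in> Bstr g. period b = 2 * g}"

end

theory Submission
  imports Defs
begin


lemma moebius_mult_prime:
  assumes p: "prime (p::nat)" and e: "e > 0"
  shows "moebius (p * e) = (if p dvd e then 0 else - moebius e)"
proof (cases "p dvd e")
  case True
  then obtain f where "e = p * f" by blast
  hence "p^2 dvd p * e" by (simp add: power2_eq_square)
  hence "\<not> squarefree (p * e)" using p unfolding squarefree_def
    by (metis not_prime_unit)
  thus ?thesis using True p e by (simp add: moebius_def)
next
  case False
  have cop: "coprime p e" by (rule prime_imp_coprime[OF p False])
  have sq: "squarefree (p * e) \<longleftrightarrow> squarefree e"
    using squarefree_mult_coprime[OF cop] squarefree_prime[OF p] squarefree_multD by blast
  have pf: "prime_factors (p * e) = insert p (prime_factors e)"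
    using prime_factors_product[of p e] p e prime_prime_factors[OF p] by auto
  have "p \<notin> prime_factors e" using False by auto
  hence "card (prime_factors (p*e)) = Suc (card (prime_factors e))" using pf by simp
  thus ?thesis using False sq p e by (simp add: moebius_def)
qed

lemma sum_moebius:
  assumes n: "n > 0"
  shows "(\<Sum>d\<in>{d. d dvd n}. moebius d) = (if n = 1 then 1 else 0)"
proof (cases "n = 1")
  case True thus ?thesis by (simp add: moebius_def)
next
  case False
  then obtain p where p: "prime p" "p dvd n" using n prime_factor_nat by blast
  define A where "A = {d. d dvd n \<and> \<not> p dvd d}"
  define B where "B = {d. d dvd n \<and> p dvd d}"
  have fin: "finite {d. d dvd n}" using n by simp
  have AB: "{d. d dvd n} = A \<union> B" "A \<inter> B = {}" unfolding A_def B_def by auto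
  have fA: "finite A" "finite B" using fin unfolding A_def B_def by (auto intro: finite_subset)
  have Bimg: "B = (\<lambda>e. p * e) ` {e. e dvd n div p}"
  proof (intro equalityI subsetI)
    fix x assume "x \<in> B"
    then obtain e where "x = p * e" "x dvd n" unfolding B_def by auto
    thus "x \<in> (\<lambda>e. p * e) ` {e. e dvd n div p}" using p
      by (auto intro!: image_eqI[of _ _ e] simp: dvd_div_iff_mult prime_gt_0_nat mult.commute)
  next
    fix x assume "x \<in> (\<lambda>e. p * e) ` {e. e dvd n div p}"
    then obtain e where "x = p * e" "e dvd n div p" by auto
    thus "x \<in> B" using p unfolding B_def
      by (auto simp: dvd_div_iff_mult prime_gt_0_nat mult.commute)
  qed
  have inj: "inj_on (\<lambda>e. p * e) {e. e dvd n div p}" using p by (auto simp: inj_on_def prime_gt_0_nat)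
  have np: "n div p > 0" using p n by (metis dvd_div_eq_0_iff gr0I not_prime_0 dvd_0_left_iff)
  have "sum moebius B = (\<Sum>e\<in>{e. e dvd n div p}. moebius (p * e))"
    unfolding Bimg by (rule sum.reindex[OF inj, unfolded comp_def])
  also have "\<dots> = (\<Sum>e\<in>{e. e dvd n div p}. if p dvd e then 0 else - moebius e)"
  proof (rule sum.cong[OF refl])
    fix e assume "e \<in> {e. e dvd n div p}"
    hence "e > 0" using np by (auto intro: gr0I)
    thus "moebius (p * e) = (if p dvd e then 0 else - moebius e)" using moebius_mult_prime[OF p(1)] by blast
  qed
  also have "\<dots> = - (\<Sum>e\<in>{e. e dvd n div p \<and> \<not> p dvd e}. moebius e)"
  proof -
    have fE: "finite {e. e dvd n div p}" using np by simp
    have "(\<Sum>e\<in>{e. e dvd n div p}. if p dvd e then 0 else - moebius e)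
        = (\<Sum>e\<in>{e. e dvd n div p}. if \<not> p dvd e then - moebius e else 0)"
      by (rule sum.cong) auto
    also have "\<dots> = (\<Sum>e\<in>{e \<in> {e. e dvd n div p}. \<not> p dvd e}. - moebius e)"
      by (rule sum.inter_filter[OF fE, symmetric])
    also have "\<dots> = - (\<Sum>e\<in>{e. e dvd n div p \<and> \<not> p dvd e}. moebius e)"
      by (simp add: sum_negf)
    finally show ?thesis .
  qed
  also have "{e. e dvd n div p \<and> \<not> p dvd e} = A"
  proof -
    have "e dvd n div p \<longleftrightarrow> e dvd n" if "\<not> p dvd e" for e
    proof
      assume "e dvd n div p"
      moreover have "n div p dvd n" using p(2) by (metis dvd_mult_div_cancel dvd_triv_right)
      ultimately show "e dvd n" by (rule dvd_trans)
    next
      assume "e dvd n"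
      have "coprime p e" by (rule prime_imp_coprime[OF p(1) that])
      hence "coprime e p" by (simp add: coprime_commute)
      moreover have "e dvd p * (n div p)" using \<open>e dvd n\<close> p(2) by simp
      ultimately show "e dvd n div p" using coprime_dvd_mult_right_iff by blast
    qed
    thus ?thesis unfolding A_def by auto
  qed
  finally have "sum moebius B = - sum moebius A" .
  hence "sum moebius {d. d dvd n} = 0" unfolding AB(1) using sum.union_disjoint[OF fA AB(2), of moebius] by simp
  thus ?thesis using False by simp
qed

lemma dvd_div_iff_mult':
  fixes n d p :: nat
  assumes "0 < n" "d dvd n"
  shows "p dvd n div d \<longleftrightarrow> d * p dvd n"
proof -
  obtain k where k: "n = d * k" using assms(2) by blast
  have "d > 0" using assms k by (auto intro: gr0I)
  hence "n div d = k" using k by simp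
  thus ?thesis using k \<open>d > 0\<close> by simp
qed

lemma moebius_inversion:
  fixes N F :: "nat \<Rightarrow> int"
  assumes n: "n > 0" and F: "\<And>k. k dvd n \<Longrightarrow> F k = (\<Sum>p\<in>{p. p dvd k}. N p)"
  shows "N n = (\<Sum>d\<in>{d. d dvd n}. moebius d * F (n div d))"
proof -
  define D where "D = {d. d dvd n}"
  have fD: "finite D" using n unfolding D_def by simp
  have "(\<Sum>d\<in>D. moebius d * F (n div d)) = (\<Sum>d\<in>D. \<Sum>p\<in>{p. p \<in> D \<and> p dvd n div d}. moebius d * N p)"
  proof (rule sum.cong[OF refl])
    fix d assume d: "d \<in> D"
    have "{p. p \<in> D \<and> p dvd n div d} = {p. p dvd n div d}" using d dvd_div_iff_mult'[OF n, of d] unfolding D_def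
      by (auto intro: dvd_trans[OF dvd_triv_right])
    moreover have "n div d dvd n" using d unfolding D_def by (metis dvd_mult_div_cancel dvd_triv_right mem_Collect_eq)
    ultimately show "moebius d * F (n div d) = (\<Sum>p\<in>{p. p \<in> D \<and> p dvd n div d}. moebius d * N p)"
      using d F[of "n div d"] unfolding D_def by (simp add: sum_distrib_left)
  qed
  also have "\<dots> = (\<Sum>p\<in>D. \<Sum>d\<in>{d. d \<in> D \<and> p dvd n div d}. moebius d * N p)"
    by (rule sum.swap_restrict[OF fD fD])
  also have "\<dots> = (\<Sum>p\<in>D. N p * (\<Sum>d\<in>{d. d dvd n div p}. moebius d))"
  proof (rule sum.cong[OF refl])
    fix p assume p: "p \<in> D"
    have "p > 0" using p n unfolding D_def by (auto intro: gr0I)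
    have "{d. d \<in> D \<and> p dvd n div d} = {d. d dvd n div p}"
    proof (intro equalityI subsetI)
      fix d assume "d \<in> {d. d \<in> D \<and> p dvd n div d}"
      hence "d dvd n" "d * p dvd n" using dvd_div_iff_mult'[OF n] unfolding D_def by auto
      thus "d \<in> {d. d dvd n div p}" using dvd_div_iff_mult'[OF n, of p d] p unfolding D_def
        by (simp add: mult.commute)
    next
      fix d assume "d \<in> {d. d dvd n div p}"
      hence "p * d dvd n" using dvd_div_iff_mult'[OF n, of p d] p unfolding D_def by simp
      hence "d dvd n" "d * p dvd n" by (auto simp: mult.commute intro: dvd_trans[OF dvd_triv_right])
      thus "d \<in> {d. d \<in> D \<and> p dvd n div d}" using dvd_div_iff_mult'[OF n] unfolding D_def by auto
    qed
    thus "(\<Sum>d\<in>{d. d \<in> D \<and> p dvd n div d}. moebius d * N p) = N p * (\<Sum>d\<in>{d. d dvd n div p}. moebius d)"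
      by (simp add: sum_distrib_left mult.commute)
  qed
  also have "\<dots> = (\<Sum>p\<in>D. if p = n then N p else 0)"
  proof (rule sum.cong[OF refl])
    fix p assume p: "p \<in> D"
    have "n div p > 0" using p n unfolding D_def by (metis dvd_div_eq_0_iff gr0I mem_Collect_eq)
    moreover have "n div p = 1 \<longleftrightarrow> p = n" using p n unfolding D_def
      by (metis div_self dvd_mult_div_cancel less_numeral_extra(3) mem_Collect_eq nat_mult_1_right)
    ultimately show "N p * (\<Sum>d\<in>{d. d dvd n div p}. moebius d) = (if p = n then N p else 0)"
      by (simp add: sum_moebius)
  qed
  also have "\<dots> = N n" using fD by (simp add: D_def)
  finally show ?thesis unfolding D_def by simp
qed



lemma rot_mult: "rotate k b = b \<Longrightarrow> rotate (q * k) b = b"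
proof (induction q)
  case (Suc q) thus ?case by (metis rotate_rotate mult_Suc add.commute)
qed simp

lemma rotate_inj: "rotate k xs = rotate k ys \<Longrightarrow> length xs = length ys \<Longrightarrow> xs = ys"
proof -
  assume a: "rotate k xs = rotate k ys" "length xs = length ys"
  have "rotate (length xs - k mod length xs) (rotate k xs) = xs" for xs :: "'a list"
  proof (cases "length xs = 0")
    case False
    hence "(length xs - k mod length xs + k) mod length xs = 0"
      by (metis add.commute mod_add_right_eq mod_less_divisor gr0I le_add_diff_inverse less_imp_le mod_self)
    thus ?thesis by (simp add: rotate_rotate)
  qed simp
  from this[of xs] this[of ys] a show ?thesis by metis
qed

lemma period_props:
  assumes "length b > 0"
  shows "0 < period b" "rotate (period b) b = b"
proof -
  have "0 < length b \<and> rotate (length b) b = b" using assms by simp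
  hence "0 < period b \<and> rotate (period b) b = b" unfolding period_def by (rule LeastI)
  thus "0 < period b" "rotate (period b) b = b" by auto
qed

lemma period_dvd_iff:
  assumes "length b > 0"
  shows "rotate k b = b \<longleftrightarrow> period b dvd k"
proof
  assume "period b dvd k" thus "rotate k b = b" using rot_mult[OF period_props(2)[OF assms]]
    by (auto simp: mult.commute)
next
  assume k: "rotate k b = b"
  define p where "p = period b"
  have p: "0 < p" "rotate p b = b" using period_props[OF assms] p_def by auto
  have "rotate (k mod p) (rotate (k div p * p) b) = b"
    using k by (simp add: rotate_rotate add.commute)
  hence r: "rotate (k mod p) b = b" using rot_mult[OF p(2)] by simp
  show "period b dvd k"
  proof (rule ccontr)
    assume "\<not> period b dvd k"
    hence "0 < k mod p" using p_def by (simp add: dvd_eq_mod_eq_0 gr0I)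
    hence "p \<le> k mod p" using r unfolding p_def period_def by (auto intro: Least_le)
    thus False using mod_less_divisor[OF p(1), of k] by simp
  qed
qed

lemma period_rotate:
  shows "period (rotate j b) = period b"
proof -
  have "rotate k (rotate j b) = rotate j b \<longleftrightarrow> rotate k b = b" for k
  proof -
    have "rotate k (rotate j b) = rotate j (rotate k b)" by (simp add: rotate_rotate add.commute)
    thus ?thesis using rotate_inj[of j "rotate k b" b] by auto
  qed
  thus ?thesis unfolding period_def by simp
qed

lemma period_dvd_len: "length b > 0 \<Longrightarrow> period b dvd length b"
  using period_dvd_iff[of b "length b"] by simp

lemma Bstr_rot: "b \<in> Bstr g \<longleftrightarrow> length b = 2 * g \<and> rotate g b = map Not b"
proof
  assume b: "b \<in> Bstr g"
  hence l: "length b = 2 * g" and c: "\<forall>i<g. b ! i \<noteq> b ! (i + g)" by (auto simp: Bstr_def)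
  have "rotate g b ! i = map Not b ! i" if "i < length b" for i
  proof (cases "i < g")
    case True
    thus ?thesis using that l c by (simp add: nth_rotate add.commute)
  next
    case False
    hence "(g + i) mod (2 * g) = i - g" using that l by (simp add: mod_if)
    moreover have "b ! (i - g) \<noteq> b ! i" using c[rule_format, of "i - g"] False that l by simp
    ultimately show ?thesis using that l by (simp add: nth_rotate)
  qed
  thus "length b = 2 * g \<and> rotate g b = map Not b" using l by (auto intro: nth_equalityI)
next
  assume a: "length b = 2 * g \<and> rotate g b = map Not b"
  have "b ! i \<noteq> b ! (i + g)" if "i < g" for i
  proof -
    have l: "length b = 2 * g" using a by simp
    have "rotate g b ! i = b ! (g + i)" using that l nth_rotate[of i b g] by simp
    moreover have "rotate g b ! i = (\<not> b ! i)" using a that by simp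
    ultimately show ?thesis by (simp add: add.commute) blast
  qed
  thus "b \<in> Bstr g" using a by (simp add: Bstr_def)
qed

lemma Bstr_rotate: "b \<in> Bstr g \<Longrightarrow> rotate k b \<in> Bstr g"
  unfolding Bstr_rot by (metis length_rotate rotate_rotate add.commute rotate_map)

lemma finite_bool_lists: "finite {xs :: bool list. length xs = n}"
  using finite_lists_length_eq[of "UNIV :: bool set" n] by simp

lemma card_bool_lists: "card {xs :: bool list. length xs = n} = 2 ^ n"
  using card_lists_length_eq[of "UNIV :: bool set" n] by simp

lemma finite_Bstr: "finite (Bstr g)"
  by (rule finite_subset[OF _ finite_bool_lists[of "2*g"]]) (auto simp: Bstr_def)

definition gen :: "nat \<Rightarrow> nat \<Rightarrow> bool list \<Rightarrow> bool list" where
  "gen h n x = map (\<lambda>i. x ! (i mod h) \<noteq> odd (i div h)) [0..<n]"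

lemma gen_in:
  assumes h: "h > 0" and m: "m > 0"
  shows "rotate h (gen h (2*m*h) x) = map Not (gen h (2*m*h) x)"
proof (rule nth_equalityI)
  define n where "n = 2*m*h"
  fix i assume i: "i < length (rotate h (gen h (2*m*h) x))"
  hence i': "i < n" by (simp add: gen_def n_def)
  have "n > 0" using h m n_def by simp
  have "rotate h (gen h n x) ! i = gen h n x ! ((h + i) mod n)"
    using i' by (simp add: nth_rotate gen_def)
  also have "\<dots> = (\<not> gen h n x ! i)"
  proof (cases "i + h < n")
    case True
    hence "(h + i) mod n = i + h" by simp
    moreover have "(h + i) mod h = i mod h" "(h + i) div h = Suc (i div h)" using h by simp_all
    ultimately show ?thesis using True i' by (simp add: gen_def)
  next
    case False
    define j where "j = i + h - n"
    have nh: "(2*m-1)*h = n - h" "h \<le> n" using m by (simp_all add: diff_mult_distrib n_def)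
    have j: "j < h" "i = j + (2*m - 1) * h" using False i' nh unfolding j_def by linarith+
    have "(h + i) mod n = (h + i - n) mod n" using False by (simp add: le_mod_geq add.commute)
    also have "\<dots> = h + i - n" using i' nh(2) by (intro mod_less) linarith
    finally have "(h + i) mod n = j" unfolding j_def by (simp add: add.commute)
    moreover have "i mod h = j"
    proof -
      have "i mod h = (j + (2*m - 1) * h) mod h" using j(2) by (rule arg_cong)
      also have "\<dots> = j mod h" by (rule mod_mult_self1)
      also have "\<dots> = j" using j(1) by (rule mod_less)
      finally show ?thesis .
    qed
    moreover have "i div h = 2*m - 1"
    proof -
      have "i div h = (j + (2*m - 1) * h) div h" using j(2) by (rule arg_cong)
      also have "\<dots> = (2*m - 1) + j div h" using h by (intro div_mult_self1) simp
      also have "j div h = 0" using j(1) by (rule div_less)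
      finally show ?thesis by simp
    qed
    moreover have "odd (2*m - 1)" using m by simp
    ultimately show ?thesis using j i' by (simp add: gen_def)
  qed
  finally show "rotate h (gen h (2*m*h) x) ! i = map Not (gen h (2*m*h) x) ! i"
    using i' n_def by (simp add: gen_def)
qed simp

lemma gen_take:
  assumes "length x = h" "h \<le> n"
  shows "take h (gen h n x) = x"
  using assms by (intro nth_equalityI) (auto simp: gen_def)

lemma gen_of:
  assumes h: "h > 0" and m: "m > 0" and b: "length b = 2*m*h" "rotate h b = map Not b"
  shows "b = gen h (2*m*h) (take h b)"
proof -
  define n where "n = 2*m*h"
  have step: "b ! (i + h) = (\<not> b ! i)" if "i + h < n" for i
  proof -
    have "rotate h b ! i = b ! (i + h)" using that b(1) nth_rotate[of i b h] n_def by (simp add: add.commute)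
    moreover have "rotate h b ! i = (\<not> b ! i)" using b(2) that b(1) n_def by simp
    ultimately show ?thesis by simp
  qed
  have "i < n \<longrightarrow> b ! i = (b ! (i mod h) \<noteq> odd (i div h))" for i
  proof (induction i rule: less_induct)
    case (less i)
    show ?case
    proof (cases "i < h")
      case True thus ?thesis by simp
    next
      case False
      hence e: "i = (i - h) + h" by simp
      have "(i - h) mod h = i mod h" using False by (simp add: le_mod_geq)
      moreover have "i div h = Suc ((i - h) div h)" using False h by (simp add: le_div_geq)
      moreover have "i - h < i" using False h by simp
      ultimately show ?thesis using less.IH[of "i - h"] step[of "i - h"] e
        by (metis odd_Suc_div_two even_Suc less_imp_diff_less)
    qed
  qed
  moreover have "h \<le> n" using m n_def by simp
  ultimately show ?thesis using b(1) h unfolding n_def[symmetric]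
    by (intro nth_equalityI) (auto simp: gen_def)
qed

lemma count_antiper:
  assumes h: "h > 0" and m: "m > 0"
  shows "card {b::bool list. length b = 2*m*h \<and> rotate h b = map Not b} = 2 ^ h"
proof -
  have hn: "h \<le> 2*m*h" using m by simp
  have eq: "{b::bool list. length b = 2*m*h \<and> rotate h b = map Not b} = gen h (2*m*h) ` {x. length x = h}"
  proof (intro equalityI subsetI)
    fix b assume "b \<in> {b::bool list. length b = 2*m*h \<and> rotate h b = map Not b}"
    hence "length b = 2*m*h" "rotate h b = map Not b" by auto
    thus "b \<in> gen h (2*m*h) ` {x. length x = h}" using gen_of[OF h m] hn
      by (intro image_eqI[of _ _ "take h b"]) auto
  next
    fix b assume "b \<in> gen h (2*m*h) ` {x::bool list. length x = h}"
    thus "b \<in> {b::bool list. length b = 2*m*h \<and> rotate h b = map Not b}"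
      using gen_in[OF h m] by (auto simp: gen_def)
  qed
  have "inj_on (gen h (2*m*h)) {x::bool list. length x = h}"
    by (rule inj_on_inverseI[of _ "take h"]) (use gen_take hn in auto)
  hence "card (gen h (2*m*h) ` {x::bool list. length x = h}) = card {x::bool list. length x = h}"
    by (rule card_image)
  thus ?thesis unfolding eq card_bool_lists .
qed



lemma fix_count:
  assumes g: "g > 0" and d: "d dvd 2 * g"
  shows "card {b \<in> Bstr g. rotate (2 * g div d) b = b} = (if odd d then 2 ^ (g div d) else 0)"
proof (cases "odd d")
  case False
  then obtain e where e: "d = 2 * e" by blast
  have "e dvd g" using d e by simp
  then obtain k where k: "g = e * k" by blast
  have ep: "e > 0" using k g by (auto intro: gr0I)
  have kk: "2 * g div d = k" using e k ep by simp
  have "{b \<in> Bstr g. rotate (2 * g div d) b = b} = {}"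
  proof (intro equalityI subsetI)
    fix b assume "b \<in> {b \<in> Bstr g. rotate (2 * g div d) b = b}"
    hence b: "length b = 2 * g" "rotate g b = map Not b" "rotate k b = b" using kk Bstr_rot by auto
    have "rotate g b = b" using rot_mult[OF b(3), of e] k by simp
    hence "map Not b ! 0 = b ! 0" using b(2) by simp
    thus "b \<in> {}" using b(1) g by simp
  qed auto
  hence "card {b \<in> Bstr g. rotate (2 * g div d) b = b} = 0" by (simp only: card.empty)
  thus ?thesis using False by simp
next
  case True
  have "coprime d 2" using True by simp
  hence "d dvd g" using d by (metis coprime_dvd_mult_right_iff)
  then obtain h where h: "g = d * h" by blast
  have dp: "d > 0" and hp: "h > 0" using h g by (auto intro: gr0I)
  have kk: "2 * g div d = 2 * h" "g div d = h" using h dp by simp_all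
  obtain q where q: "d = 2 * q + 1" using True by (metis oddE)
  have gq: "g = q * (2 * h) + h" using h q by (simp add: algebra_simps)
  have rg: "rotate g b = rotate h b" if "rotate (2*h) b = b" for b :: "bool list"
    using rot_mult[OF that, of q] gq by (metis rotate_rotate add.commute)
  have "{b \<in> Bstr g. rotate (2 * g div d) b = b} = {b::bool list. length b = 2*d*h \<and> rotate h b = map Not b}"
  proof (intro equalityI subsetI)
    fix b assume "b \<in> {b \<in> Bstr g. rotate (2 * g div d) b = b}"
    hence b: "length b = 2 * g" "rotate g b = map Not b" "rotate (2*h) b = b" using kk Bstr_rot by auto
    thus "b \<in> {b::bool list. length b = 2*d*h \<and> rotate h b = map Not b}" using rg[OF b(3)] h by simp
  next
    fix b :: "bool list" assume "b \<in> {b::bool list. length b = 2*d*h \<and> rotate h b = map Not b}"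
    hence b: "length b = 2*d*h" "rotate h b = map Not b" by auto
    have r2: "rotate (2*h) b = b"
    proof -
      have "rotate (2*h) b = rotate h (rotate h b)" by (simp add: rotate_rotate mult_2)
      also have "\<dots> = b" using b(2) by (simp add: rotate_map comp_def)
      finally show ?thesis .
    qed
    show "b \<in> {b \<in> Bstr g. rotate (2 * g div d) b = b}"
      using r2 rg[OF r2] b h kk Bstr_rot by auto
  qed
  thus ?thesis using True count_antiper[OF hp dp] kk by simp
qed

lemma cyc_orbit_range:
  assumes "length b > 0"
  shows "cyc_orbit b = (\<lambda>k. rotate k b) ` {0..<length b}"
proof (intro equalityI subsetI)
  fix c assume "c \<in> cyc_orbit b"
  then obtain k where "c = rotate k b" unfolding cyc_orbit_def by auto
  hence "c = rotate (k mod length b) b" by (metis rotate_conv_mod)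
  thus "c \<in> (\<lambda>k. rotate k b) ` {0..<length b}" using assms by auto
qed (auto simp: cyc_orbit_def)

lemma orbit_card:
  assumes l: "length b > 0" and p: "period b = length b"
  shows "card (cyc_orbit b) = length b"
proof -
  have "inj_on (\<lambda>k. rotate k b) {0..<length b}"
  proof (rule ccontr)
    assume "\<not> inj_on (\<lambda>k. rotate k b) {0..<length b}"
    then obtain i j where ij: "i < j" "j < length b" "rotate i b = rotate j b"
      unfolding inj_on_def by (metis atLeastLessThan_iff linorder_neqE_nat)
    have "rotate i (rotate (j - i) b) = rotate i b" using ij by (simp add: rotate_rotate)
    hence "rotate (j - i) b = b" by (rule rotate_inj) simp
    hence "length b dvd j - i" using period_dvd_iff[OF l] p by simp
    moreover have "0 < j - i" "j - i < length b" using ij by auto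
    ultimately show False by (meson dvd_imp_le not_le)
  qed
  thus ?thesis unfolding cyc_orbit_range[OF l] by (simp add: card_image)
qed

lemma orbit_rotate: "cyc_orbit (rotate k b) = cyc_orbit b"
proof (cases "length b = 0")
  case True thus ?thesis by (simp add: cyc_orbit_def)
next
  case False
  define n where "n = length b"
  have n: "n > 0" using False n_def by simp
  show ?thesis
  proof (intro equalityI subsetI)
    fix c assume "c \<in> cyc_orbit (rotate k b)"
    thus "c \<in> cyc_orbit b" by (auto simp: cyc_orbit_def rotate_rotate)
  next
    fix c assume "c \<in> cyc_orbit b"
    then obtain j where j: "c = rotate j b" by (auto simp: cyc_orbit_def)
    have e: "n - k mod n + k = n * (Suc (k div n))"
    proof -
      have a: "n * (k div n) + k mod n = k" by (rule mult_div_mod_eq)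
      have b: "k mod n < n" using n by simp
      show ?thesis unfolding mult_Suc_right using a b by linarith
    qed
    have "rotate (j + (n - k mod n)) (rotate k b) = rotate (j + n * (Suc (k div n))) b"
      unfolding rotate_rotate e[symmetric] by (simp add: add.assoc)
    also have "\<dots> = rotate ((j + n * (Suc (k div n))) mod n) b" using rotate_conv_mod n_def by metis
    also have "\<dots> = rotate (j mod n) b" by (simp only: mod_mult_self2)
    also have "\<dots> = c" using j rotate_conv_mod n_def by metis
    finally show "c \<in> cyc_orbit (rotate k b)" unfolding cyc_orbit_def by blast
  qed
qed

lemma orbit_eq: "c \<in> cyc_orbit b \<Longrightarrow> cyc_orbit c = cyc_orbit b"
proof -
  assume "c \<in> cyc_orbit b"
  then obtain k where "c = rotate k b" unfolding cyc_orbit_def by auto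
  thus ?thesis using orbit_rotate by simp
qed

lemma self_in_orbit: "b \<in> cyc_orbit b"
  unfolding cyc_orbit_def by (auto intro: exI[of _ 0])

lemma Bstr_len: "b \<in> Bstr g \<Longrightarrow> length b = 2 * g"
  by (simp add: Bstr_def)

lemma F_sum:
  assumes g: "g > 0" and k: "k dvd 2 * g"
  shows "int (card {b \<in> Bstr g. rotate k b = b}) = (\<Sum>p\<in>{p. p dvd k}. int (card {b \<in> Bstr g. period b = p}))"
proof -
  define S where "S = {b \<in> Bstr g. rotate k b = b}"
  have kp: "k > 0" using k g by (auto intro: gr0I)
  have S: "S = {b \<in> Bstr g. period b dvd k}" unfolding S_def
    using period_dvd_iff Bstr_len g by (metis (no_types, lifting) mult_pos_pos zero_less_numeral)
  have fS: "finite S" unfolding S_def using finite_Bstr by simp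
  have fT: "finite {p. p dvd k}" using kp by simp
  have "card S = (\<Sum>p\<in>{p. p dvd k}. card {b \<in> S. period b = p})"
    unfolding card_eq_sum by (rule sum.group[OF fS fT, symmetric]) (auto simp: S)
  also have "\<dots> = (\<Sum>p\<in>{p. p dvd k}. card {b \<in> Bstr g. period b = p})"
  proof (rule sum.cong[OF refl])
    fix p assume "p \<in> {p. p dvd k}"
    hence "{b \<in> S. period b = p} = {b \<in> Bstr g. period b = p}" unfolding S by auto
    thus "card {b \<in> S. period b = p} = card {b \<in> Bstr g. period b = p}" by simp
  qed
  finally show ?thesis unfolding S_def by simp
qed

lemma Pcount_formula:
  assumes g: "g > 0"
  shows "int (Pcount g) = (\<Sum>x\<in>{x. x dvd g \<and> odd x}. moebius x * 2 ^ (g div x))"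
proof -
  define N where "N p = int (card {b \<in> Bstr g. period b = p})" for p
  define F where "F k = int (card {b \<in> Bstr g. rotate k b = b})" for k
  have n: "2 * g > 0" using g by simp
  have "N (2*g) = (\<Sum>d\<in>{d. d dvd 2*g}. moebius d * F (2*g div d))"
    by (rule moebius_inversion[OF n]) (use F_sum[OF g] in \<open>simp add: N_def F_def\<close>)
  also have "\<dots> = (\<Sum>d\<in>{d. d dvd 2*g}. if odd d then moebius d * 2 ^ (g div d) else 0)"
  proof (rule sum.cong[OF refl])
    fix d assume "d \<in> {d. d dvd 2*g}"
    hence "F (2*g div d) = (if odd d then 2 ^ (g div d) else 0)"
      using fix_count[OF g] unfolding F_def by simp
    thus "moebius d * F (2*g div d) = (if odd d then moebius d * 2 ^ (g div d) else 0)" by simp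
  qed
  also have "\<dots> = (\<Sum>d\<in>{d \<in> {d. d dvd 2*g}. odd d}. moebius d * 2 ^ (g div d))"
    by (rule sum.inter_filter[symmetric]) (use n in simp)
  also have "{d \<in> {d. d dvd 2*g}. odd d} = {x. x dvd g \<and> odd x}"
  proof -
    have "d dvd 2 * g \<longleftrightarrow> d dvd g" if "odd d" for d
    proof -
      have "coprime d 2" using that by simp
      thus ?thesis by (metis coprime_dvd_mult_right_iff)
    qed
    thus ?thesis by auto
  qed
  finally show ?thesis unfolding N_def Pcount_def by simp
qed

lemma Eprime_count:
  assumes g: "g > 0"
  shows "2 * g * card (Eprime g) = Pcount g"
proof -
  define S where "S = {b \<in> Bstr g. period b = 2 * g}"
  have E: "Eprime g = cyc_orbit ` S" unfolding Eprime_def S_def by auto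
  have fS: "finite S" unfolding S_def using finite_Bstr by simp
  have sub: "cyc_orbit b \<subseteq> S" if "b \<in> S" for b
    using that unfolding S_def cyc_orbit_def by (auto intro: Bstr_rotate simp: period_rotate)
  have U: "\<Union> (Eprime g) = S" unfolding E using sub self_in_orbit by blast
  have "2 * g * card (Eprime g) = card (\<Union> (Eprime g))"
  proof (rule card_partition)
    show "finite (Eprime g)" unfolding E using fS by simp
    show "finite (\<Union> (Eprime g))" unfolding U by (rule fS)
  next
    fix c assume "c \<in> Eprime g"
    then obtain b where b: "b \<in> S" "c = cyc_orbit b" unfolding E by auto
      have "length b = 2 * g" "period b = 2 * g" using b(1) Bstr_len unfolding S_def by auto
      thus "card c = 2 * g" using orbit_card[of b] b(2) g by simp
  next
    fix c1 c2 assume "c1 \<in> Eprime g" "c2 \<in> Eprime g" "c1 \<noteq> c2"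
    thus "c1 \<inter> c2 = {}" unfolding E using orbit_eq by blast
  qed
  thus ?thesis unfolding U S_def Pcount_def .
qed

theorem mainTheorem2:
  fixes g :: nat
  assumes "g \<ge> 1"
  shows "real (card (Eprime g)) = real (Pcount g) / real (2 * g)
       \<and> real (Pcount g) / real (2 * g)
           = (1 / real (2 * g)) * (\<Sum>x\<in>{x. x dvd g \<and> odd x}. real_of_int (moebius x) * 2 ^ (g div x))"
proof
  have g: "g > 0" using assms by simp
  have "real (2 * g * card (Eprime g)) = real (Pcount g)" using Eprime_count[OF g] by simp
  thus "real (card (Eprime g)) = real (Pcount g) / real (2 * g)" using g
    by (simp add: field_simps)
  have "real_of_int (int (Pcount g)) = real_of_int (\<Sum>x\<in>{x. x dvd g \<and> odd x}. moebius x * 2 ^ (g div x))"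
    using Pcount_formula[OF g] by simp
  hence "real (Pcount g) = (\<Sum>x\<in>{x. x dvd g \<and> odd x}. real_of_int (moebius x) * 2 ^ (g div x))"
    by simp
  thus "real (Pcount g) / real (2 * g)
           = (1 / real (2 * g)) * (\<Sum>x\<in>{x. x dvd g \<and> odd x}. real_of_int (moebius x) * 2 ^ (g div x))"
    by simp
qed

end
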